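(* Let $S$ be a completely simple semigroup definable in $\mathcal{M}$. Then there exist definable sets $I,\Lambda$, a definable group $G$ and a definable map $P:\Lambda\times I\to G$ such that $S$ is definably isomorphic to the Rees matrix semigroup $\mathscr{M}(I,G,\Lambda,P)$.
   Context: $\mathcal{M}$ is a sufficiently saturated o-minimal structure with definable choice; "definable" means definable with parameters. A semigroup is simple if it has no proper ideals, and completely simple if it is simple and has a primitive idempotent ($e$ with: $f$ idempotent and $ef=fe=f$ imply $f=e$). For a group $G$, nonempty sets $I,\Lambda$ and $P:\Lambda\times I\to G$, $\mathscr{M}(I,G,\Lambda,P)$ is the set $I\times G\times\Lambda$ with product $(i,g,\lambda)(j,h,\mu)=(i,g\,P(\lambda,j)\,h,\mu)$. *)

theory Defs
  imports "HOL-Algebra.Group" "HOL-Library.Countable_Set"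
begin

text \<open>An n-tuple of M is a list of length n; a structure is given (as in van den Dries,
  Tame Topology and O-minimal Structures, Ch. 1) by the collections Def n of definable
  (with parameters) subsets of M^n.\<close>

definition tuples :: "nat \<Rightarrow> 'a list set" where
  "tuples n = {xs. length xs = n}"

definition basic_interval :: "'a::linorder set \<Rightarrow> bool" where
  "basic_interval J \<longleftrightarrow> (\<exists>a. J = {a}) \<or> (\<exists>a b. J = {a<..<b}) \<or> (\<exists>a. J = {a<..})
      \<or> (\<exists>b. J = {..<b}) \<or> J = UNIV"

definition o_minimal_structure :: "(nat \<Rightarrow> 'a::linorder list set set) \<Rightarrow> bool" where
  "o_minimal_structure Def \<longleftrightarrow>
     (\<forall>n. Def n \<subseteq> Pow (tuples n)) \<and>
     (\<forall>n. {} \<in> Def n \<and> tuples n \<in> Def n) \<and>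
     (\<forall>n A B. A \<in> Def n \<longrightarrow> B \<in> Def n \<longrightarrow> A \<union> B \<in> Def n) \<and>
     (\<forall>n A. A \<in> Def n \<longrightarrow> tuples n - A \<in> Def n) \<and>
     (\<forall>n A. A \<in> Def n \<longrightarrow> {xs @ [y] |xs y. xs \<in> A} \<in> Def (Suc n)
                          \<and> {y # xs |xs y. xs \<in> A} \<in> Def (Suc n)) \<and>
     (\<forall>n. {xs \<in> tuples (Suc (Suc n)). hd xs = last xs} \<in> Def (Suc (Suc n))) \<and>
     (\<forall>n A. A \<in> Def (Suc n) \<longrightarrow> butlast ` A \<in> Def n) \<and>
     {[x, y] |x y. x < y} \<in> Def 2 \<and>
     (\<forall>a. {[a]} \<in> Def 1) \<and>
     (\<forall>A \<in> Def 1. \<exists>F. finite F \<and> (\<forall>J\<in>F. basic_interval J) \<and> A = {[x] |x. \<exists>J\<in>F. x \<in> J})"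

definition definable_fun ::
  "(nat \<Rightarrow> 'a list set set) \<Rightarrow> nat \<Rightarrow> nat \<Rightarrow> 'a list set \<Rightarrow> ('a list \<Rightarrow> 'a list) \<Rightarrow> bool" where
  "definable_fun Def n m A f \<longleftrightarrow>
     A \<in> Def n \<and> f ` A \<subseteq> tuples m \<and> {x @ f x |x. x \<in> A} \<in> Def (n + m)"

definition fiber :: "'a list set \<Rightarrow> 'a list \<Rightarrow> 'a list set" where
  "fiber X t = {y. t @ y \<in> X}"

definition definable_choice :: "(nat \<Rightarrow> 'a list set set) \<Rightarrow> bool" where
  "definable_choice Def \<longleftrightarrow>
     (\<forall>m n X. X \<in> Def (m + n) \<longrightarrow>
        (\<exists>f. definable_fun Def m n (take m ` X) f \<and>
             (\<forall>t \<in> take m ` X. t @ f t \<in> X) \<and>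
             (\<forall>s \<in> take m ` X. \<forall>t \<in> take m ` X. fiber X s = fiber X t \<longrightarrow> f s = f t)))"

definition aleph1_saturated :: "(nat \<Rightarrow> 'a list set set) \<Rightarrow> bool" where
  "aleph1_saturated Def \<longleftrightarrow>
     (\<forall>n \<X>. countable \<X> \<longrightarrow> \<X> \<subseteq> Def n \<longrightarrow>
        (\<forall>\<F>. \<F> \<subseteq> \<X> \<longrightarrow> finite \<F> \<longrightarrow> (\<exists>x \<in> tuples n. \<forall>X\<in>\<F>. x \<in> X)) \<longrightarrow>
        (\<exists>x \<in> tuples n. \<forall>X\<in>\<X>. x \<in> X))"

definition definable_op ::
  "(nat \<Rightarrow> 'a list set set) \<Rightarrow> nat \<Rightarrow> 'a list set \<Rightarrow> ('a list \<Rightarrow> 'a list \<Rightarrow> 'a list) \<Rightarrow> bool" where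
  "definable_op Def n S m \<longleftrightarrow>
     S \<in> Def n \<and> (\<forall>x\<in>S. \<forall>y\<in>S. m x y \<in> S) \<and>
     {x @ y @ m x y |x y. x \<in> S \<and> y \<in> S} \<in> Def (n + n + n)"

definition semigroup_on :: "'b set \<Rightarrow> ('b \<Rightarrow> 'b \<Rightarrow> 'b) \<Rightarrow> bool" where
  "semigroup_on S m \<longleftrightarrow> (\<forall>x\<in>S. \<forall>y\<in>S. m x y \<in> S) \<and>
     (\<forall>x\<in>S. \<forall>y\<in>S. \<forall>z\<in>S. m (m x y) z = m x (m y z))"

definition is_ideal :: "'b set \<Rightarrow> ('b \<Rightarrow> 'b \<Rightarrow> 'b) \<Rightarrow> 'b set \<Rightarrow> bool" where
  "is_ideal S m J \<longleftrightarrow> J \<subseteq> S \<and> (\<forall>s\<in>S. \<forall>j\<in>J. m s j \<in> J \<and> m j s \<in> J)"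

definition simple_semigroup :: "'b set \<Rightarrow> ('b \<Rightarrow> 'b \<Rightarrow> 'b) \<Rightarrow> bool" where
  "simple_semigroup S m \<longleftrightarrow> semigroup_on S m \<and>
     (\<forall>J. is_ideal S m J \<and> J \<noteq> {} \<longrightarrow> J = S)"

definition primitive_idempotent :: "'b set \<Rightarrow> ('b \<Rightarrow> 'b \<Rightarrow> 'b) \<Rightarrow> 'b \<Rightarrow> bool" where
  "primitive_idempotent S m e \<longleftrightarrow> e \<in> S \<and> m e e = e \<and>
     (\<forall>f\<in>S. m f f = f \<and> m e f = f \<and> m f e = f \<longrightarrow> f = e)"

definition completely_simple :: "'b set \<Rightarrow> ('b \<Rightarrow> 'b \<Rightarrow> 'b) \<Rightarrow> bool" where
  "completely_simple S m \<longleftrightarrow> simple_semigroup S m \<and> (\<exists>e. primitive_idempotent S m e)"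

definition rees_mult ::
  "('g \<Rightarrow> 'g \<Rightarrow> 'g) \<Rightarrow> ('l \<Rightarrow> 'i \<Rightarrow> 'g) \<Rightarrow> 'i \<times> 'g \<times> 'l \<Rightarrow> 'i \<times> 'g \<times> 'l \<Rightarrow> 'i \<times> 'g \<times> 'l" where
  "rees_mult mg P x y = (case x of (i, g, l) \<Rightarrow> case y of (j, h, mu) \<Rightarrow> (i, mg (mg g (P l j)) h, mu))"

end

theory Submission
  imports Defs
begin

locale cs =
  fixes S :: "'b set" and m :: "'b \<Rightarrow> 'b \<Rightarrow> 'b" (infixl "\<cdot>" 70) and e :: 'b
  assumes cl[simp]: "x\<in>S \<Longrightarrow> y\<in>S \<Longrightarrow> x\<cdot>y \<in> S"
  and as[simp]: "x\<in>S \<Longrightarrow> y\<in>S \<Longrightarrow> z\<in>S \<Longrightarrow> x\<cdot>y\<cdot>z = x\<cdot>(y\<cdot>z)"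
  and eS[simp]: "e\<in>S" and ee[simp]: "e\<cdot>e = e"
  and prim: "f\<in>S \<Longrightarrow> f\<cdot>f = f \<Longrightarrow> e\<cdot>f = f \<Longrightarrow> f\<cdot>e = f \<Longrightarrow> f = e"
  and sim: "x\<in>S \<Longrightarrow> y\<in>S \<Longrightarrow> \<exists>u\<in>S. \<exists>v\<in>S. y = u\<cdot>x\<cdot>v"
begin

definition "G = {g\<in>S. e\<cdot>g = g \<and> g\<cdot>e = g}"
definition "I = {i\<in>S. i\<cdot>i = i \<and> i\<cdot>e = i}"
definition "L = {l\<in>S. l\<cdot>l = l \<and> e\<cdot>l = l}"

lemma ee2[simp]: "z\<in>S \<Longrightarrow> e\<cdot>(e\<cdot>z) = e\<cdot>z"
proof -
  assume z: "z\<in>S"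
  have "e\<cdot>e\<cdot>z = e\<cdot>(e\<cdot>z)" using as[of e e z] z eS by blast
  then show ?thesis using ee by metis
qed

lemma GS[simp]: "g\<in>G \<Longrightarrow> g\<in>S" by (simp add: G_def)
lemma Gl[simp]: "g\<in>G \<Longrightarrow> e\<cdot>g = g" unfolding G_def by blast
lemma Gr[simp]: "g\<in>G \<Longrightarrow> g\<cdot>e = g" unfolding G_def by blast
lemma Gl2[simp]: "g\<in>G \<Longrightarrow> z\<in>S \<Longrightarrow> e\<cdot>(g\<cdot>z) = g\<cdot>z"
proof -
  assume g: "g\<in>G" and z: "z\<in>S"
  have "e\<cdot>(g\<cdot>z) = e\<cdot>g\<cdot>z" using as[of e g z] g z by (simp only: GS eS simp_thms)
  also have "\<dots> = g\<cdot>z" using Gl[OF g] by (simp only:)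
  finally show ?thesis .
qed
lemma Gr2[simp]: "g\<in>G \<Longrightarrow> z\<in>S \<Longrightarrow> g\<cdot>(e\<cdot>z) = g\<cdot>z"
proof -
  assume g: "g\<in>G" and z: "z\<in>S"
  have "g\<cdot>(e\<cdot>z) = g\<cdot>e\<cdot>z" using as[of g e z] g z by (simp only: GS eS simp_thms)
  also have "\<dots> = g\<cdot>z" using Gr[OF g] by (simp only:)
  finally show ?thesis .
qed
lemma eG[simp]: "e\<in>G" unfolding G_def by simp
lemma Gm[simp]: "g\<in>G \<Longrightarrow> h\<in>G \<Longrightarrow> g\<cdot>h\<in>G"
proof -
  assume g: "g\<in>G" and h: "h\<in>G"
  have 1: "g\<cdot>h\<in>S" using g h by simp
  have 2: "e\<cdot>(g\<cdot>h) = g\<cdot>h" using g h by simp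
  have 3: "g\<cdot>h\<cdot>e = g\<cdot>h" using g h by simp
  show ?thesis unfolding G_def using 1 2 3 by blast
qed
lemma eSe[simp]: "x\<in>S \<Longrightarrow> e\<cdot>x\<cdot>e \<in> G"
  unfolding G_def by simp
lemma eSe'[simp]: "x\<in>S \<Longrightarrow> e\<cdot>(x\<cdot>e) \<in> G"
  using eSe by simp

lemma G_idem: "g\<in>G \<Longrightarrow> g\<cdot>g = g \<Longrightarrow> g = e"
  using prim unfolding G_def by blast

lemma linv: assumes g: "g\<in>G" shows "\<exists>y\<in>G. y\<cdot>g = e"
proof -
  obtain u v where uv: "u\<in>S" "v\<in>S" "e = u\<cdot>g\<cdot>v" using sim[of g e] g by auto
  define \<alpha> where "\<alpha> = e\<cdot>u\<cdot>e"
  define \<beta> where "\<beta> = e\<cdot>v\<cdot>e"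
  have aG: "\<alpha>\<in>G" "\<beta>\<in>G" using uv(1,2) by (auto simp: \<alpha>_def \<beta>_def)
  define h where "h = \<alpha>\<cdot>g"
  have hG: "h\<in>G" using aG g by (simp add: h_def)
  have "h\<cdot>\<beta> = e\<cdot>(u\<cdot>g\<cdot>v)\<cdot>e"
    using uv(1,2) g by (simp add: h_def \<alpha>_def \<beta>_def)
  also have "\<dots> = e" using uv(3)[symmetric] by simp
  finally have hb: "h\<cdot>\<beta> = e" .
  have "(\<beta>\<cdot>h)\<cdot>(\<beta>\<cdot>h) = \<beta>\<cdot>(h\<cdot>\<beta>)\<cdot>h" using aG hG by simp
  then have "(\<beta>\<cdot>h)\<cdot>(\<beta>\<cdot>h) = \<beta>\<cdot>h" using hb aG hG by simp
  then have "\<beta>\<cdot>h = e" using G_idem aG hG by simp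
  then show ?thesis using aG g by (intro bexI[of _ "\<beta>\<cdot>\<alpha>"]) (auto simp: h_def)
qed

lemma inv2: assumes g: "g\<in>G" shows "\<exists>y\<in>G. y\<cdot>g = e \<and> g\<cdot>y = e"
proof -
  obtain y where y: "y\<in>G" "y\<cdot>g = e" using linv g by blast
  obtain z where z: "z\<in>G" "z\<cdot>y = e" using linv y by blast
  have "g\<cdot>y = e\<cdot>(g\<cdot>y)" using g y by simp
  also have "\<dots> = z\<cdot>y\<cdot>(g\<cdot>y)" by (simp only: z(2))
  also have "\<dots> = z\<cdot>(y\<cdot>g)\<cdot>y" using g y(1) z(1) by simp
  also have "\<dots> = z\<cdot>e\<cdot>y" by (simp only: y(2))
  also have "\<dots> = e" using y z by simp
  finally show ?thesis using y by blast
qed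

lemma grp: "group \<lparr>carrier = G, mult = m, one = e\<rparr>"
  by (rule groupI) (auto dest: linv)

definition "gi g = (SOME y. y\<in>G \<and> y\<cdot>g = e \<and> g\<cdot>y = e)"
lemma gi: "g\<in>G \<Longrightarrow> gi g\<in>G \<and> gi g\<cdot>g = e \<and> g\<cdot>gi g = e"
  unfolding gi_def by (rule someI_ex) (use inv2 in blast)

definition "yy x = gi (e\<cdot>x\<cdot>e)"
lemma yy: "x\<in>S \<Longrightarrow> yy x\<in>G \<and> yy x\<cdot>(e\<cdot>x\<cdot>e) = e \<and> (e\<cdot>x\<cdot>e)\<cdot>yy x = e"
  unfolding yy_def by (rule gi, rule eSe)

lemma key: assumes x: "x\<in>S" shows "x\<cdot>yy x\<cdot>x = x"
proof -
  obtain u v where uv: "u\<in>S" "v\<in>S" "x = u\<cdot>e\<cdot>v" using sim[of e x] x by auto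
  define y where "y = yy x"
  have y: "y\<in>G" "(e\<cdot>x\<cdot>e)\<cdot>y = e" using yy[OF x] by (auto simp: y_def)
  define \<alpha> where "\<alpha> = e\<cdot>u\<cdot>e"
  define \<beta> where "\<beta> = e\<cdot>v\<cdot>e"
  have aG: "\<alpha>\<in>G" "\<beta>\<in>G" using uv by (auto simp: \<alpha>_def \<beta>_def)
  have "e\<cdot>x\<cdot>e = \<alpha>\<cdot>\<beta>" using uv by (simp add: \<alpha>_def \<beta>_def)
  with y have aby: "\<alpha>\<cdot>\<beta>\<cdot>y = e" by simp
  define q where "q = \<beta>\<cdot>y\<cdot>\<alpha>"
  have qG: "q\<in>G" using aG y by (simp add: q_def)
  have "q\<cdot>q = \<beta>\<cdot>y\<cdot>(\<alpha>\<cdot>\<beta>\<cdot>y)\<cdot>\<alpha>" using aG y by (simp add: q_def)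
  then have "q\<cdot>q = q" using aby aG y by (simp add: q_def)
  then have q: "q = e" using G_idem qG by simp
  have "x\<cdot>y\<cdot>x = u\<cdot>q\<cdot>v" using uv aG y by (simp add: q_def \<alpha>_def \<beta>_def)
  then show ?thesis using q uv by (simp add: y_def)
qed

lemma yS[simp]: "x\<in>S \<Longrightarrow> yy x\<in>S" using yy GS by blast
lemma yG[simp]: "x\<in>S \<Longrightarrow> yy x\<in>G" using yy by blast

definition "i0 x = x\<cdot>yy x"
definition "l0 x = yy x\<cdot>x"
definition "phi x = (i0 x, e\<cdot>x\<cdot>e, l0 x)"

lemma yxy: assumes x: "x\<in>S" shows "yy x\<cdot>x\<cdot>yy x = yy x"
proof -
  have "yy x\<cdot>x\<cdot>yy x = yy x\<cdot>(e\<cdot>x\<cdot>e)\<cdot>yy x" using x yG[OF x] by simp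
  also have "\<dots> = yy x" using yy[OF x] x by simp
  finally show ?thesis .
qed

lemma yxe: assumes x: "x\<in>S" shows "yy x\<cdot>(x\<cdot>e) = e"
proof -
  have "yy x\<cdot>(x\<cdot>e) = yy x\<cdot>(e\<cdot>x\<cdot>e)" using x yG[OF x] by simp
  also have "\<dots> = e" using yy[OF x] by simp
  finally show ?thesis .
qed

lemma yxy2: assumes x: "x\<in>S" "z\<in>S" shows "yy x\<cdot>(x\<cdot>(yy x\<cdot>z)) = yy x\<cdot>z"
  using yxy[OF x(1)] x by (metis as cl yS)
lemma key2: assumes x: "x\<in>S" "z\<in>S" shows "x\<cdot>(yy x\<cdot>(x\<cdot>z)) = x\<cdot>z"
  using key[OF x(1)] x by (metis as cl yS)

lemma i0I: assumes x: "x\<in>S" shows "i0 x\<in>I"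
proof -
  have "i0 x\<cdot>i0 x = x\<cdot>(yy x\<cdot>(x\<cdot>yy x))" using x by (simp add: i0_def)
  also have "\<dots> = i0 x" using x yxy by (simp add: i0_def)
  finally show ?thesis using x by (simp add: I_def i0_def)
qed

lemma l0L: assumes x: "x\<in>S" shows "l0 x\<in>L"
proof -
  have "l0 x\<cdot>l0 x = yy x\<cdot>(x\<cdot>(yy x\<cdot>x))" using x by (simp add: l0_def)
  also have "\<dots> = l0 x" using x yxy2 by (simp add: l0_def)
  finally show ?thesis using x by (simp add: L_def l0_def)
qed

lemma i0x: "x\<in>S \<Longrightarrow> i0 x\<cdot>x = x" using key by (simp add: i0_def)
lemma xl0: "x\<in>S \<Longrightarrow> x\<cdot>l0 x = x" using key by (simp add: l0_def)

lemma IS[simp]: "i\<in>I \<Longrightarrow> i\<in>S" by (simp add: I_def)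
lemma LS[simp]: "i\<in>L \<Longrightarrow> i\<in>S" by (simp add: L_def)

lemma I_e: assumes i: "i\<in>I" shows "e\<cdot>i = e"
proof -
  have i': "i\<in>S" "i\<cdot>i = i" "i\<cdot>e = i" using i unfolding I_def by blast+
  have 1: "e\<cdot>i\<cdot>e = e\<cdot>i" using i' by simp
  have 2: "e\<cdot>(e\<cdot>i) = e\<cdot>i" using i' by simp
  have "e\<cdot>i\<in>G" unfolding G_def using i' 1 2 by simp
  moreover have "(e\<cdot>i)\<cdot>(e\<cdot>i) = e\<cdot>i"
  proof -
    have "(e\<cdot>i)\<cdot>(e\<cdot>i) = e\<cdot>((i\<cdot>e)\<cdot>i)" using i'(1) by simp
    also have "\<dots> = e\<cdot>i" using i'(2,3) by simp
    finally show ?thesis .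
  qed
  ultimately show ?thesis using G_idem by blast
qed

lemma L_e: assumes i: "i\<in>L" shows "i\<cdot>e = e"
proof -
  have i': "i\<in>S" "i\<cdot>i = i" "e\<cdot>i = i" using i unfolding L_def by blast+
  have 1: "e\<cdot>(i\<cdot>e) = i\<cdot>e" using as[OF eS i'(1) eS] i'(3) by metis
  have 2: "i\<cdot>e\<cdot>e = i\<cdot>e" using i' by simp
  have "i\<cdot>e\<in>G" unfolding G_def using i' 1 2 by simp
  moreover have "(i\<cdot>e)\<cdot>(i\<cdot>e) = i\<cdot>e"
  proof -
    have "(i\<cdot>e)\<cdot>(i\<cdot>e) = (i\<cdot>(e\<cdot>i))\<cdot>e" using i'(1) by simp
    also have "\<dots> = i\<cdot>e" using i'(2,3) by simp
    finally show ?thesis .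
  qed
  ultimately show ?thesis using G_idem by blast
qed

lemma II: assumes i: "i\<in>I" and j: "j\<in>I" shows "i\<cdot>j = i"
proof -
  have i': "i\<in>S" "i\<cdot>e = i" using i unfolding I_def by blast+
  have "i\<cdot>j = (i\<cdot>e)\<cdot>j" using i' by simp
  also have "\<dots> = i\<cdot>(e\<cdot>j)" using i'(1) j by simp
  also have "\<dots> = i" using I_e[OF j] i' by simp
  finally show ?thesis .
qed
lemma LL: assumes i: "i\<in>L" and j: "j\<in>L" shows "i\<cdot>j = j"
proof -
  have j': "j\<in>S" "e\<cdot>j = j" using j unfolding L_def by blast+
  have "i\<cdot>j = i\<cdot>(e\<cdot>j)" using j' by simp
  also have "\<dots> = (i\<cdot>e)\<cdot>j" using j'(1) i by simp
  also have "\<dots> = j" using L_e[OF i] j' by simp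
  finally show ?thesis .
qed

lemma I_uniq: assumes "i\<in>I" "x\<in>S" "i\<cdot>x = x" shows "i = i0 x"
proof -
  have "i\<cdot>i0 x = (i\<cdot>x)\<cdot>yy x" using assms(1,2) by (simp add: i0_def)
  then have "i\<cdot>i0 x = i0 x" using assms by (simp add: i0_def)
  then show ?thesis using II[OF assms(1) i0I[OF assms(2)]] by simp
qed

lemma L_uniq: assumes "i\<in>L" "x\<in>S" "x\<cdot>i = x" shows "i = l0 x"
proof -
  have "l0 x\<cdot>i = yy x\<cdot>(x\<cdot>i)" using assms by (simp add: l0_def)
  then have "l0 x\<cdot>i = l0 x" using assms by (simp add: l0_def)
  then show ?thesis using LL[OF l0L[OF assms(2)] assms(1)] by simp
qed

lemma decomp: assumes x: "x\<in>S" shows "i0 x\<cdot>(e\<cdot>x\<cdot>e)\<cdot>l0 x = x"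
proof -
  have "i0 x\<cdot>(e\<cdot>x\<cdot>e)\<cdot>l0 x = x\<cdot>(yy x\<cdot>(e\<cdot>x\<cdot>e))\<cdot>yy x\<cdot>x"
    using x by (simp add: i0_def l0_def)
  also have "\<dots> = x\<cdot>yy x\<cdot>x" using yy[OF x] x by simp
  finally show ?thesis using key x by simp
qed

lemma Iid: "i\<in>I \<Longrightarrow> i\<cdot>i = i" unfolding I_def by blast
lemma Ie: "i\<in>I \<Longrightarrow> i\<cdot>e = i" unfolding I_def by blast
lemma Lid: "i\<in>L \<Longrightarrow> i\<cdot>i = i" unfolding L_def by blast
lemma eL: "i\<in>L \<Longrightarrow> e\<cdot>i = i" unfolding L_def by blast
lemma Iid2: assumes "i\<in>I" "z\<in>S" shows "i\<cdot>(i\<cdot>z) = i\<cdot>z"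
  using as[of i i z] assms Iid[OF assms(1)] by (metis IS)
lemma I_e2: assumes "i\<in>I" "z\<in>S" shows "e\<cdot>(i\<cdot>z) = e\<cdot>z"
  using as[of e i z] assms I_e[OF assms(1)] by (metis IS eS)
lemma L_e2: assumes "i\<in>L" "z\<in>S" shows "z\<cdot>(i\<cdot>e) = z\<cdot>e"
  using assms L_e[OF assms(1)] by simp

lemma phi_inj: "inj_on phi S"
proof (rule inj_onI)
  fix x y assume x: "x\<in>S" and y: "y\<in>S" and eq: "phi x = phi y"
  from eq have e1: "i0 x = i0 y" "e\<cdot>x\<cdot>e = e\<cdot>y\<cdot>e" "l0 x = l0 y"
    unfolding phi_def prod.inject by blast+
  have "x = i0 x\<cdot>(e\<cdot>x\<cdot>e)\<cdot>l0 x" using decomp[OF x] by (rule sym)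
  also have "\<dots> = i0 y\<cdot>(e\<cdot>y\<cdot>e)\<cdot>l0 y" unfolding e1 ..
  also have "\<dots> = y" by (rule decomp[OF y])
  finally show "x = y" .
qed

lemma phi_bij: "bij_betw phi S (I \<times> G \<times> L)"
proof (rule bij_betw_imageI)
  show "inj_on phi S" by (rule phi_inj)
  show "phi ` S = I \<times> G \<times> L"
  proof
    show "phi ` S \<subseteq> I \<times> G \<times> L" using i0I l0L by (auto simp: phi_def)
    show "I \<times> G \<times> L \<subseteq> phi ` S"
    proof clarify
      fix i g l assume a: "i\<in>I" "g\<in>G" "l\<in>L"
      define x where "x = i\<cdot>g\<cdot>l"
      have x: "x\<in>S" using a by (simp add: x_def)
      have "i\<cdot>x = x" using a Iid2[OF a(1)] by (simp add: x_def)
      then have 1: "i0 x = i" using I_uniq a x by simp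
      have "x\<cdot>l = x" using a Lid[OF a(3)] by (simp add: x_def)
      then have 2: "l0 x = l" using L_uniq a x by simp
      have 3: "e\<cdot>x\<cdot>e = g" using a I_e2[OF a(1)] L_e[OF a(3)] by (simp add: x_def)
      show "(i, g, l) \<in> phi ` S" unfolding phi_def using 1 2 3 x by (intro image_eqI[of _ _ x]) auto
    qed
  qed
qed

lemma phi_hom: assumes x: "x\<in>S" and y: "y\<in>S"
  shows "phi (x\<cdot>y) = rees_mult m m (phi x) (phi y)"
proof -
  have xy: "x\<cdot>y\<in>S" using x y by simp
  have 1: "i0 (x\<cdot>y) = i0 x"
  proof -
    have "i0 x\<cdot>(x\<cdot>y) = (i0 x\<cdot>x)\<cdot>y" using x y i0I[OF x] by simp
    also have "\<dots> = x\<cdot>y" using i0x[OF x] by simp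
    finally show ?thesis using I_uniq[OF i0I[OF x] xy] by simp
  qed
  have 2: "l0 (x\<cdot>y) = l0 y"
  proof -
    have "(x\<cdot>y)\<cdot>l0 y = x\<cdot>(y\<cdot>l0 y)" using x y l0L[OF y] by simp
    also have "\<dots> = x\<cdot>y" using xl0[OF y] by simp
    finally show ?thesis using L_uniq[OF l0L[OF y] xy] by simp
  qed
  define a where "a = i0 x" define b where "b = e\<cdot>x\<cdot>e" define c where "c = l0 x"
  define a' where "a' = i0 y" define b' where "b' = e\<cdot>y\<cdot>e" define c' where "c' = l0 y"
  have abc: "a\<in>I" "b\<in>G" "c\<in>L" "a'\<in>I" "b'\<in>G" "c'\<in>L"
    using x y i0I l0L by (auto simp: a_def b_def c_def a'_def b'_def c'_def)
  have dx: "x = a\<cdot>b\<cdot>c" unfolding a_def b_def c_def using decomp[OF x] by simp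
  have dy: "y = a'\<cdot>b'\<cdot>c'" unfolding a'_def b'_def c'_def using decomp[OF y] by simp
  have "e\<cdot>(x\<cdot>y)\<cdot>e = e\<cdot>(a\<cdot>b\<cdot>c\<cdot>(a'\<cdot>b'\<cdot>c'))\<cdot>e" unfolding dx dy ..
  also have "\<dots> = b\<cdot>(c\<cdot>a')\<cdot>b'"
    using abc I_e2[OF abc(1)] L_e[OF abc(6)] by simp
  finally have 3: "e\<cdot>(x\<cdot>y)\<cdot>e = b\<cdot>(c\<cdot>a')\<cdot>b'" .
  show ?thesis using 1 2 3 by (simp add: phi_def rees_mult_def a_def b_def c_def a'_def b'_def c'_def)
qed

lemma LIG: assumes l: "l\<in>L" and i: "i\<in>I" shows "l\<cdot>i\<in>G"
proof -
  have 1: "e\<cdot>(l\<cdot>i) = l\<cdot>i"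
  proof -
    have "e\<cdot>(l\<cdot>i) = e\<cdot>l\<cdot>i" using l i by simp
    also have "\<dots> = l\<cdot>i" using eL[OF l] by simp
    finally show ?thesis .
  qed
  have 2: "l\<cdot>i\<cdot>e = l\<cdot>i" using l i Ie[OF i] by simp
  show ?thesis unfolding G_def using 1 2 l i by simp
qed

lemma eI: "e\<in>I" unfolding I_def by simp
lemma eLL: "e\<in>L" unfolding L_def by simp

end

lemma tuples_0: "tuples 0 = {[]}" by (auto simp: tuples_def)
lemma in_tuples[simp]: "xs \<in> tuples k \<longleftrightarrow> length xs = k" by (simp add: tuples_def)

context
  fixes Def :: "nat \<Rightarrow> 'a::linorder list set set"
  assumes om: "o_minimal_structure Def"
begin

lemma omu: "(\<forall>n. Def n \<subseteq> Pow (tuples n)) \<and>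
     (\<forall>n. {} \<in> Def n \<and> tuples n \<in> Def n) \<and>
     (\<forall>n A B. A \<in> Def n \<longrightarrow> B \<in> Def n \<longrightarrow> A \<union> B \<in> Def n) \<and>
     (\<forall>n A. A \<in> Def n \<longrightarrow> tuples n - A \<in> Def n) \<and>
     (\<forall>n A. A \<in> Def n \<longrightarrow> {xs @ [y] |xs y. xs \<in> A} \<in> Def (Suc n)
                          \<and> {y # xs |xs y. xs \<in> A} \<in> Def (Suc n)) \<and>
     (\<forall>n. {xs \<in> tuples (Suc (Suc n)). hd xs = last xs} \<in> Def (Suc (Suc n))) \<and>
     (\<forall>n A. A \<in> Def (Suc n) \<longrightarrow> butlast ` A \<in> Def n) \<and>
     {[x, y] |x y. x < y} \<in> Def 2 \<and>
     (\<forall>a. {[a]} \<in> Def 1) \<and>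
     (\<forall>A \<in> Def 1. \<exists>F. finite F \<and> (\<forall>J\<in>F. basic_interval J) \<and> A = {[x] |x. \<exists>J\<in>F. x \<in> J})"
  using om unfolding o_minimal_structure_def by assumption

lemma D_sub: "A \<in> Def k \<Longrightarrow> A \<subseteq> tuples k" using omu[THEN conjunct1] by blast
lemma D_len: "A \<in> Def k \<Longrightarrow> xs \<in> A \<Longrightarrow> length xs = k" using D_sub by fastforce
lemma D_tuples: "tuples k \<in> Def k" using omu[THEN conjunct2, THEN conjunct1] by blast
lemma D_Un: "A \<in> Def k \<Longrightarrow> B \<in> Def k \<Longrightarrow> A \<union> B \<in> Def k"
  using omu[THEN conjunct2, THEN conjunct2, THEN conjunct1] by blast
lemma D_compl: "A \<in> Def k \<Longrightarrow> tuples k - A \<in> Def k"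
  using omu[THEN conjunct2, THEN conjunct2, THEN conjunct2, THEN conjunct1] by blast
lemma D_snoc: "A \<in> Def k \<Longrightarrow> {xs @ [y] |xs y. xs \<in> A} \<in> Def (Suc k)"
  using omu[THEN conjunct2, THEN conjunct2, THEN conjunct2, THEN conjunct2, THEN conjunct1] by blast
lemma D_cons: "A \<in> Def k \<Longrightarrow> {y # xs |xs y. xs \<in> A} \<in> Def (Suc k)"
  using omu[THEN conjunct2, THEN conjunct2, THEN conjunct2, THEN conjunct2, THEN conjunct1] by blast
lemma D_diag: "{xs \<in> tuples (Suc (Suc k)). hd xs = last xs} \<in> Def (Suc (Suc k))"
  using omu[THEN conjunct2, THEN conjunct2, THEN conjunct2, THEN conjunct2, THEN conjunct2, THEN conjunct1] by blast
lemma D_butlast: "A \<in> Def (Suc k) \<Longrightarrow> butlast ` A \<in> Def k"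
  using omu[THEN conjunct2, THEN conjunct2, THEN conjunct2, THEN conjunct2, THEN conjunct2, THEN conjunct2, THEN conjunct1] by blast
lemma D_single: "{[a]} \<in> Def 1"
  using omu[THEN conjunct2, THEN conjunct2, THEN conjunct2, THEN conjunct2, THEN conjunct2, THEN conjunct2, THEN conjunct2, THEN conjunct2, THEN conjunct1] by blast

lemma D_Int: assumes "A \<in> Def k" "B \<in> Def k" shows "A \<inter> B \<in> Def k"
proof -
  have "A \<inter> B = tuples k - ((tuples k - A) \<union> (tuples k - B))" using D_sub assms by blast
  then show ?thesis using assms by (simp add: D_Un D_compl)
qed

lemma D_cyl_back: "A \<in> Def p \<Longrightarrow> {u @ w |u w. u \<in> A \<and> length w = q} \<in> Def (p + q)"
proof (induction q)
  case 0
  then show ?case by simp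
next
  case (Suc q)
  have "{u @ w |u w. u \<in> A \<and> length w = Suc q} = {xs @ [y] |xs y. xs \<in> {u @ w |u w. u \<in> A \<and> length w = q}}"
    by (auto simp: length_Suc_conv_rev) blast+
  then show ?case using D_snoc[OF Suc.IH[OF Suc.prems]] by simp
qed

lemma D_cyl_front: "A \<in> Def p \<Longrightarrow> {w @ u |u w. u \<in> A \<and> length w = q} \<in> Def (q + p)"
proof (induction q)
  case 0
  then show ?case by simp
next
  case (Suc q)
  have "{w @ u |u w. u \<in> A \<and> length w = Suc q} = {y # xs |xs y. xs \<in> {w @ u |u w. u \<in> A \<and> length w = q}}"
  proof (rule Set.set_eqI, rule iffI)
    fix x assume "x \<in> {w @ u |u w. u \<in> A \<and> length w = Suc q}"
    then obtain u w where uw: "x = w @ u" "u \<in> A" "length w = Suc q" by blast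
    then obtain y w' where "w = y # w'" "length w' = q" by (metis length_Suc_conv)
    then show "x \<in> {y # xs |xs y. xs \<in> {w @ u |u w. u \<in> A \<and> length w = q}}" using uw by auto
  next
    fix x assume "x \<in> {y # xs |xs y. xs \<in> {w @ u |u w. u \<in> A \<and> length w = q}}"
    then obtain y u w where "x = y # (w @ u)" "u \<in> A" "length w = q" by blast
    then show "x \<in> {w @ u |u w. u \<in> A \<and> length w = Suc q}"
      by (intro CollectI exI[of _ u] exI[of _ "y # w"]) simp
  qed
  then show ?case using D_cons[OF Suc.IH[OF Suc.prems]] by simp
qed

lemma D_prod: assumes A: "A \<in> Def p" and B: "B \<in> Def q"
  shows "{u @ v |u v. u \<in> A \<and> v \<in> B} \<in> Def (p + q)"
proof -
  have "{u @ v |u v. u \<in> A \<and> v \<in> B} =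
     {u @ w |u w. u \<in> A \<and> length w = q} \<inter> {w @ u |u w. u \<in> B \<and> length w = p}"
  proof (rule Set.set_eqI, rule iffI)
    fix x assume "x \<in> {u @ v |u v. u \<in> A \<and> v \<in> B}"
    then show "x \<in> {u @ w |u w. u \<in> A \<and> length w = q} \<inter> {w @ u |u w. u \<in> B \<and> length w = p}"
      using D_len[OF A] D_len[OF B] by blast
  next
    fix x assume "x \<in> {u @ w |u w. u \<in> A \<and> length w = q} \<inter> {w @ u |u w. u \<in> B \<and> length w = p}"
    then obtain u w u' w' where 1: "x = u @ w" "u \<in> A" "length w = q" "x = w' @ u'" "u' \<in> B" "length w' = p"
      by blast
    then have "length u = length w'" using D_len[OF A] by simp
    then have "u = w' \<and> w = u'" using 1 by (metis append_eq_append_conv)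
    then show "x \<in> {u @ v |u v. u \<in> A \<and> v \<in> B}" using 1 by blast
  qed
  then show ?thesis using D_Int[OF D_cyl_back[OF A] D_cyl_front[OF B]] by simp
qed

lemma D_take: "A \<in> Def (k + q) \<Longrightarrow> take k ` A \<in> Def k"
proof (induction q arbitrary: A)
  case 0
  then have "take k ` A = A" using D_len[OF 0[simplified]] by (force simp: image_iff)
  then show ?case using 0 by simp
next
  case (Suc q)
  have A: "A \<in> Def (Suc (k + q))" using Suc.prems by simp
  have "take k ` A = take k ` (butlast ` A)"
  proof -
    have "take k (butlast xs) = take k xs" if "xs \<in> A" for xs
      using D_len[OF A that] by (simp add: butlast_conv_take min_def)
    then show ?thesis by (force simp: image_iff)
  qed
  then show ?case using Suc.IH[OF D_butlast[OF A]] by simp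
qed

lemma D_eq_lt: assumes ij: "i < j" "j < N" shows "{xs \<in> tuples N. xs!i = xs!j} \<in> Def N"
proof -
  define d where "d = j - i - 1"
  define r where "r = N - j - 1"
  have jd: "j = i + d + 1" and Nr: "N = i + (Suc (Suc d) + r)" using ij by (auto simp: d_def r_def)
  define D0 :: "'a list set" where "D0 = {xs \<in> tuples (Suc (Suc d)). hd xs = last xs}"
  define P1 :: "'a list set" where "P1 = {u @ z |u z. u \<in> D0 \<and> z \<in> tuples r}"
  define P2 :: "'a list set" where "P2 = {w @ v |w v. w \<in> tuples i \<and> v \<in> P1}"
  have "P1 \<in> Def (Suc (Suc d) + r)" unfolding P1_def D0_def by (rule D_prod[OF D_diag D_tuples])
  then have P2: "P2 \<in> Def N" unfolding P2_def Nr by (rule D_prod[OF D_tuples])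
  have "{xs \<in> tuples N. xs!i = xs!j} = P2"
  proof (rule Set.set_eqI, rule iffI)
    fix xs :: "'a list" assume xs: "xs \<in> {xs \<in> tuples N. xs!i = xs!j}"
    then have len: "length xs = N" and eq: "xs!i = xs!j" by auto
    define w where "w = take i xs"
    define u where "u = take (Suc (Suc d)) (drop i xs)"
    define z where "z = drop (Suc (Suc d)) (drop i xs)"
    have split: "xs = w @ u @ z" unfolding w_def u_def z_def by (metis append_take_drop_id)
    have lu: "length u = Suc (Suc d)" using len Nr by (simp add: u_def)
    have "hd u = xs!i" using len Nr by (simp add: u_def hd_conv_nth)
    moreover have "last u = xs!j" using len Nr lu by (simp add: last_conv_nth u_def jd)
    ultimately have "u \<in> D0" using lu eq by (simp add: D0_def)
    moreover have "length z = r" using len Nr by (simp add: z_def)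
    moreover have "length w = i" using len Nr by (simp add: w_def)
    ultimately show "xs \<in> P2" unfolding P2_def P1_def using split by auto
  next
    fix xs :: "'a list" assume "xs \<in> P2"
    then obtain w u z where xs: "xs = w @ u @ z" "length w = i" "u \<in> D0" "length z = r"
      unfolding P2_def P1_def by auto
    have lu: "length u = Suc (Suc d)" and hl: "hd u = last u" using xs(3) by (auto simp: D0_def)
    have "xs!i = u!0" using xs lu by (simp add: nth_append)
    moreover have "xs!j = u!(Suc d)" using xs lu by (simp add: nth_append jd)
    moreover have "u!0 = u!(Suc d)" using hl lu by (metis diff_Suc_1 hd_conv_nth last_conv_nth list.size(3) nat.distinct(1))
    moreover have "length xs = N" using xs lu Nr by simp
    ultimately show "xs \<in> {xs \<in> tuples N. xs!i = xs!j}" by simp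
  qed
  then show ?thesis using P2 by simp
qed

lemma D_eq: assumes "i < N" "j < N" shows "{xs \<in> tuples N. xs!i = xs!j} \<in> Def N"
proof -
  consider "i < j" | "i = j" | "j < i" by arith
  then show ?thesis
  proof cases
    case 1 then show ?thesis using D_eq_lt assms by blast
  next
    case 2
    have e: "{xs \<in> tuples N. xs!i = xs!j} = tuples N" using 2 by auto
    show ?thesis unfolding e by (rule D_tuples)
  next
    case 3
    have e: "{xs \<in> tuples N. xs!i = xs!j} = {xs \<in> tuples N. xs!j = xs!i}" by auto
    show ?thesis unfolding e using D_eq_lt[OF 3 assms(1)] .
  qed
qed

lemma D_all: "(\<And>j. j < (r::nat) \<Longrightarrow> {xs \<in> tuples N. P j xs} \<in> Def N) \<Longrightarrow> {xs \<in> tuples N. \<forall>j<r. P j xs} \<in> Def N"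
proof (induction r)
  case 0
  have e: "{xs \<in> tuples N. \<forall>j<(0::nat). P j xs} = tuples N" by auto
  show ?case unfolding e by (rule D_tuples)
next
  case (Suc r)
  have "{xs \<in> tuples N. \<forall>j<Suc r. P j xs} = {xs \<in> tuples N. \<forall>j<r. P j xs} \<inter> {xs \<in> tuples N. P r xs}"
    by (auto simp: less_Suc_eq)
  then show ?case using D_Int Suc by simp
qed

lemma D_precomp: assumes A: "A \<in> Def N" and lf: "length f = N" and fk: "\<forall>j\<in>set f. j < k"
  shows "{v \<in> tuples k. map (nth v) f \<in> A} \<in> Def k"
proof -
  define C where "C = {v @ u |v u. v \<in> tuples k \<and> u \<in> A} \<inter> {xs \<in> tuples (k + N). \<forall>j<N. xs!(k+j) = xs!(f!j)}"
  have C: "C \<in> Def (k + N)" unfolding C_def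
  proof (rule D_Int)
    show "{v @ u |v u. v \<in> tuples k \<and> u \<in> A} \<in> Def (k + N)" by (rule D_prod[OF D_tuples A])
    show "{xs \<in> tuples (k + N). \<forall>j<N. xs!(k+j) = xs!(f!j)} \<in> Def (k + N)"
    proof (rule D_all, rule D_eq)
      fix j assume j: "j < N"
      show "k + j < k + N" using j by simp
      have "f!j \<in> set f" using j lf by simp
      then show "f!j < k + N" using fk by fastforce
    qed
  qed
  have "take k ` C = {v \<in> tuples k. map (nth v) f \<in> A}"
  proof (rule Set.set_eqI, rule iffI)
    fix v assume "v \<in> take k ` C"
    then obtain xs where xs: "xs \<in> C" "v = take k xs" by blast
    then obtain v' u where vu0: "xs = v'@u" "length v' = k" "u \<in> A" unfolding C_def by auto
    have all: "\<forall>j<N. xs!(k+j) = xs!(f!j)" using xs(1) unfolding C_def by blast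
    have lv: "length v' = k" using vu0 by simp
    have v: "v = v'" using vu0 xs lv by simp
    have lu: "length u = N" using D_len[OF A vu0(3)] .
    have "u = map (nth v) f"
    proof (rule nth_equalityI)
      show "length u = length (map (nth v) f)" using lu lf by simp
      fix j assume "j < length u"
      then have j: "j < N" using lu by simp
      have "u!j = (v'@u)!(k+j)" using lv by (simp add: nth_append)
      also have "\<dots> = (v'@u)!(f!j)" using all j vu0(1) by blast
      also have "\<dots> = v'!(f!j)" using fk lf j lv by (simp add: nth_append)
      finally show "u!j = map (nth v) f ! j" using v j lf by simp
    qed
    then show "v \<in> {v \<in> tuples k. map (nth v) f \<in> A}" using vu0 lv v by auto
  next
    fix v assume v: "v \<in> {v \<in> tuples k. map (nth v) f \<in> A}"
    then have lv: "length v = k" by simp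
    have "v @ map (nth v) f \<in> C" unfolding C_def using v lf fk lv by (auto simp: nth_append)
    moreover have "take k (v @ map (nth v) f) = v" using lv by simp
    ultimately show "v \<in> take k ` C" by (metis image_eqI)
  qed
  then show ?thesis using D_take[OF C] by simp
qed

end

definition BL :: "nat \<Rightarrow> nat \<Rightarrow> ('a list list \<Rightarrow> bool) \<Rightarrow> 'a list set" where
  "BL n r P = {concat xs |xs. length xs = r \<and> (\<forall>x\<in>set xs. length x = n) \<and> P xs}"

lemma len_concat: "\<forall>x\<in>set xs. length x = n \<Longrightarrow> length (concat xs) = length xs * n"
  by (induction xs) auto

lemma concat_inj: "length xs = length ys \<Longrightarrow> \<forall>x\<in>set xs. length x = n \<Longrightarrow> \<forall>x\<in>set ys. length x = n
  \<Longrightarrow> concat xs = concat ys \<Longrightarrow> xs = ys"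
proof (induction xs arbitrary: ys)
  case Nil then show ?case by simp
next
  case (Cons x xs)
  then obtain y ys' where ys: "ys = y # ys'" by (cases ys) auto
  have "x = y \<and> concat xs = concat ys'" using Cons.prems ys by (simp add: append_eq_append_conv)
  then show ?case using Cons ys by simp
qed

lemma nth_concat_blk: "\<forall>x\<in>set xs. length x = n \<Longrightarrow> j < length xs \<Longrightarrow> t < n \<Longrightarrow> concat xs ! (j*n + t) = xs!j!t"
proof (induction xs arbitrary: j)
  case Nil then show ?case by simp
next
  case (Cons x xs)
  show ?case
  proof (cases j)
    case 0 then show ?thesis using Cons.prems by (simp add: nth_append)
  next
    case (Suc j')
    have "concat (x # xs) ! (j*n + t) = concat xs ! (j'*n + t)"
      using Cons.prems Suc by (simp add: nth_append)
    then show ?thesis using Cons Suc by simp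
  qed
qed

lemma split_blocks: "length v = r * n \<Longrightarrow> \<exists>xs. length xs = r \<and> (\<forall>x\<in>set xs. length x = n) \<and> v = concat xs"
proof (induction r arbitrary: v)
  case 0 then show ?case by simp
next
  case (Suc r)
  have "length (drop n v) = r * n" using Suc.prems by simp
  then obtain xs where xs: "length xs = r" "\<forall>x\<in>set xs. length x = n" "drop n v = concat xs" using Suc.IH by blast
  have "v = concat (take n v # xs)" using xs(3) by (metis append_take_drop_id concat.simps(2))
  moreover have "length (take n v) = n" using Suc.prems by simp
  ultimately show ?case using xs by (intro exI[of _ "take n v # xs"]) auto
qed

lemma BL_Int: "BL n r (\<lambda>xs. P xs \<and> Q xs) = BL n r P \<inter> BL n r Q"
proof (rule Set.set_eqI, rule iffI)
  fix v assume "v \<in> BL n r (\<lambda>xs. P xs \<and> Q xs)" then show "v \<in> BL n r P \<inter> BL n r Q"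
    unfolding BL_def by blast
next
  fix v assume "v \<in> BL n r P \<inter> BL n r Q"
  then obtain xs ys where "length xs = r" "\<forall>x\<in>set xs. length x = n" "P xs" "v = concat xs"
     "length ys = r" "\<forall>x\<in>set ys. length x = n" "Q ys" "v = concat ys" unfolding BL_def by blast
  moreover then have "xs = ys" using concat_inj by metis
  ultimately show "v \<in> BL n r (\<lambda>xs. P xs \<and> Q xs)" unfolding BL_def by blast
qed

lemma BL_ex: "take (r*n) ` BL n (r+q) P = BL n r (\<lambda>xs. \<exists>ys. length ys = q \<and> (\<forall>y\<in>set ys. length y = n) \<and> P (xs @ ys))"
proof (rule Set.set_eqI, rule iffI)
  fix v assume "v \<in> take (r*n) ` BL n (r+q) P"
  then obtain zs where zs: "length zs = r + q" "\<forall>x\<in>set zs. length x = n" "P zs" "v = take (r*n) (concat zs)"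
    unfolding BL_def by blast
  define xs where "xs = take r zs" define ys where "ys = drop r zs"
  have z: "zs = xs @ ys" by (simp add: xs_def ys_def)
  have lx: "length xs = r" "length ys = q" using zs by (auto simp: xs_def ys_def)
  have ax: "\<forall>x\<in>set xs. length x = n" "\<forall>x\<in>set ys. length x = n" using zs(2) z by auto
  have "length (concat xs) = r * n" using len_concat[OF ax(1)] lx by simp
  then have "v = concat xs" using zs(4) z by simp
  then show "v \<in> BL n r (\<lambda>xs. \<exists>ys. length ys = q \<and> (\<forall>y\<in>set ys. length y = n) \<and> P (xs @ ys))"
    unfolding BL_def using lx ax zs(3) z by blast
next
  fix v assume "v \<in> BL n r (\<lambda>xs. \<exists>ys. length ys = q \<and> (\<forall>y\<in>set ys. length y = n) \<and> P (xs @ ys))"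
  then obtain xs ys where a: "length xs = r" "\<forall>x\<in>set xs. length x = n" "v = concat xs"
    "length ys = q" "\<forall>y\<in>set ys. length y = n" "P (xs @ ys)" unfolding BL_def by blast
  have "length (concat xs) = r * n" using len_concat[OF a(2)] a(1) by simp
  then have "v = take (r*n) (concat (xs @ ys))" using a(3) by simp
  moreover have "concat (xs @ ys) \<in> BL n (r+q) P" unfolding BL_def using a
    by (intro CollectI exI[of _ "xs @ ys"]) auto
  ultimately show "v \<in> take (r*n) ` BL n (r+q) P" by blast
qed

lemma BL1: "BL n 1 P = {x |x. length x = n \<and> P [x]}"
proof (rule Set.set_eqI, rule iffI)
  fix v assume "v \<in> BL n 1 P"
  then show "v \<in> {x |x. length x = n \<and> P [x]}" unfolding BL_def by (auto simp: length_Suc_conv )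
next
  fix v assume "v \<in> {x |x. length x = n \<and> P [x]}"
  then obtain x where "v = x" "length x = n" "P [x]" by blast
  then show "v \<in> BL n 1 P" unfolding BL_def by (intro CollectI exI[of _ "[x]"]) auto
qed
lemma BL2: "BL n 2 P = {x @ y |x y. length x = n \<and> length y = n \<and> P [x, y]}"
proof (rule Set.set_eqI, rule iffI)
  fix v assume "v \<in> BL n 2 P"
  then show "v \<in> {x @ y |x y. length x = n \<and> length y = n \<and> P [x, y]}" unfolding BL_def by (auto simp: length_Suc_conv numeral_2_eq_2) blast
next
  fix v assume "v \<in> {x @ y |x y. length x = n \<and> length y = n \<and> P [x, y]}"
  then obtain x y where "v = x @ y" "length x = n" "length y = n" "P [x, y]" by blast
  then show "v \<in> BL n 2 P" unfolding BL_def by (intro CollectI exI[of _ "[x, y]"]) auto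
qed
lemma BL3: "BL n 3 P = {x @ y @ z |x y z. length x = n \<and> length y = n \<and> length z = n \<and> P [x, y, z]}"
proof (rule Set.set_eqI, rule iffI)
  fix v assume "v \<in> BL n 3 P"
  then show "v \<in> {x @ y @ z |x y z. length x = n \<and> length y = n \<and> length z = n \<and> P [x, y, z]}" unfolding BL_def by (auto simp: length_Suc_conv numeral_3_eq_3) blast
next
  fix v assume "v \<in> {x @ y @ z |x y z. length x = n \<and> length y = n \<and> length z = n \<and> P [x, y, z]}"
  then obtain x y z where "v = x @ y @ z" "length x = n" "length y = n" "length z = n" "P [x, y, z]" by blast
  then show "v \<in> BL n 3 P" unfolding BL_def by (intro CollectI exI[of _ "[x, y, z]"]) auto
qed
lemma BL4: "BL n 4 P = {x @ y @ z @ w |x y z w. length x = n \<and> length y = n \<and> length z = n \<and> length w = n \<and> P [x, y, z, w]}"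
proof (rule Set.set_eqI, rule iffI)
  fix v assume "v \<in> BL n 4 P"
  then show "v \<in> {x @ y @ z @ w |x y z w. length x = n \<and> length y = n \<and> length z = n \<and> length w = n \<and> P [x, y, z, w]}" unfolding BL_def by (auto simp: length_Suc_conv eval_nat_numeral) blast
next
  fix v assume "v \<in> {x @ y @ z @ w |x y z w. length x = n \<and> length y = n \<and> length z = n \<and> length w = n \<and> P [x, y, z, w]}"
  then obtain x y z w where "v = x @ y @ z @ w" "length x = n" "length y = n" "length z = n" "length w = n" "P [x, y, z, w]" by blast
  then show "v \<in> BL n 4 P" unfolding BL_def by (intro CollectI exI[of _ "[x, y, z, w]"]) auto
qed

lemma ex1: "(\<exists>ys. length ys = 1 \<and> (\<forall>y\<in>set ys. length y = n) \<and> P ys) \<longleftrightarrow> (\<exists>t. length t = n \<and> P [t])"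
proof
  assume "\<exists>ys. length ys = 1 \<and> (\<forall>y\<in>set ys. length y = n) \<and> P ys"
  then obtain ys where "length ys = 1" "\<forall>y\<in>set ys. length y = n" "P ys" by blast
  moreover then obtain t where "ys = [t]" by (metis One_nat_def length_0_conv length_Suc_conv)
  ultimately show "\<exists>t. length t = n \<and> P [t]" by auto
next
  assume "\<exists>t. length t = n \<and> P [t]"
  then obtain t where "length t = n" "P [t]" by blast
  then show "\<exists>ys. length ys = 1 \<and> (\<forall>y\<in>set ys. length y = n) \<and> P ys" by (intro exI[of _ "[t]"]) auto
qed
lemma ex2: "(\<exists>ys. length ys = 2 \<and> (\<forall>y\<in>set ys. length y = n) \<and> P ys) \<longleftrightarrow> (\<exists>t s. length t = n \<and> length s = n \<and> P [t, s])"
proof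
  assume "\<exists>ys. length ys = 2 \<and> (\<forall>y\<in>set ys. length y = n) \<and> P ys"
  then obtain ys where "length ys = 2" "\<forall>y\<in>set ys. length y = n" "P ys" by blast
  moreover then obtain t s where "ys = [t, s]"
    by (metis (no_types, lifting) length_0_conv length_Suc_conv numeral_2_eq_2)
  ultimately show "\<exists>t s. length t = n \<and> length s = n \<and> P [t, s]" by auto
next
  assume "\<exists>t s. length t = n \<and> length s = n \<and> P [t, s]"
  then obtain t s where "length t = n" "length s = n" "P [t, s]" by blast
  then show "\<exists>ys. length ys = 2 \<and> (\<forall>y\<in>set ys. length y = n) \<and> P ys" by (intro exI[of _ "[t, s]"]) auto
qed

context
  fixes Def :: "nat \<Rightarrow> 'a::linorder list set set"
  assumes om: "o_minimal_structure Def"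
begin

lemma BL_atom: assumes A: "A \<in> Def (length js * n)" and js: "\<forall>j\<in>set js. j < r"
  shows "BL n r (\<lambda>xs. concat (map (nth xs) js) \<in> A) \<in> Def (r * n)"
proof -
  define F where "F = concat (map (\<lambda>j. [j*n..<j*n+n]) js)"
  have lF: "length F = length js * n" unfolding F_def by (induction js) auto
  have Fk: "\<forall>i\<in>set F. i < r * n"
  proof
    fix i assume "i \<in> set F"
    then obtain j where j: "j \<in> set js" "j*n \<le> i" "i < j*n + n" unfolding F_def by auto
    have "Suc j * n \<le> r * n" using js j(1) by (intro mult_le_mono1) auto
    then show "i < r * n" using j by simp
  qed
  have key: "map (nth (concat xs)) F = concat (map (nth xs) js)"
    if xs: "length xs = r" "\<forall>x\<in>set xs. length x = n" for xs
  proof -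
    have "map (nth (concat xs)) [j*n..<j*n+n] = xs!j" if j: "j \<in> set js" for j
    proof (rule nth_equalityI)
      have "xs!j \<in> set xs" using js j xs by simp
      then have l: "length (xs!j) = n" using xs by blast
      then show "length (map (nth (concat xs)) [j*n..<j*n+n]) = length (xs!j)" by simp
      fix t assume "t < length (map (nth (concat xs)) [j*n..<j*n+n])"
      then have t: "t < n" by simp
      then show "map (nth (concat xs)) [j*n..<j*n+n] ! t = xs!j!t"
        using nth_concat_blk[OF xs(2), of j t] js j xs(1) by (simp add: add.commute)
    qed
    then show ?thesis unfolding F_def map_concat by (simp cong: map_cong)
  qed
  have "BL n r (\<lambda>xs. concat (map (nth xs) js) \<in> A) = {v \<in> tuples (r*n). map (nth v) F \<in> A}"
  proof (rule Set.set_eqI, rule iffI)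
    fix v assume "v \<in> BL n r (\<lambda>xs. concat (map (nth xs) js) \<in> A)"
    then obtain xs where xs: "length xs = r" "\<forall>x\<in>set xs. length x = n" "v = concat xs" "concat (map (nth xs) js) \<in> A"
      unfolding BL_def by blast
    then show "v \<in> {v \<in> tuples (r*n). map (nth v) F \<in> A}" using key[OF xs(1,2)] len_concat[OF xs(2)] by simp
  next
    fix v assume v: "v \<in> {v \<in> tuples (r*n). map (nth v) F \<in> A}"
    then obtain xs where xs: "length xs = r" "\<forall>x\<in>set xs. length x = n" "v = concat xs"
      using split_blocks by (metis (no_types, lifting) in_tuples mem_Collect_eq)
    then show "v \<in> BL n r (\<lambda>xs. concat (map (nth xs) js) \<in> A)"
      using v key[OF xs(1,2)] unfolding BL_def by auto
  qed
  then show ?thesis using D_precomp[OF om _ lF Fk] A by simp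
qed

lemma BL_and: "BL n r P \<in> Def k \<Longrightarrow> BL n r Q \<in> Def k \<Longrightarrow> BL n r (\<lambda>xs. P xs \<and> Q xs) \<in> Def k"
  unfolding BL_Int by (rule D_Int[OF om])

lemma BL_proj: "BL n (r+q) P \<in> Def ((r+q)*n) \<Longrightarrow>
  BL n r (\<lambda>xs. \<exists>ys. length ys = q \<and> (\<forall>y\<in>set ys. length y = n) \<and> P (xs @ ys)) \<in> Def (r*n)"
  unfolding BL_ex[symmetric] by (rule D_take[OF om]) (simp add: add_mult_distrib)

lemma BL_one: "A \<in> Def n \<Longrightarrow> a < r \<Longrightarrow> BL n r (\<lambda>xs. xs!a \<in> A) \<in> Def (r*n)"
  using BL_atom[of A "[a]" n r] by simp
lemma BL_two: "A \<in> Def (n+n) \<Longrightarrow> a < r \<Longrightarrow> b < r \<Longrightarrow> BL n r (\<lambda>xs. xs!a @ xs!b \<in> A) \<in> Def (r*n)"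
  using BL_atom[of A "[a,b]" n r] by simp
lemma BL_three: "A \<in> Def (n+n+n) \<Longrightarrow> a < r \<Longrightarrow> b < r \<Longrightarrow> c < r \<Longrightarrow> BL n r (\<lambda>xs. xs!a @ xs!b @ xs!c \<in> A) \<in> Def (r*n)"
  using BL_atom[of A "[a,b,c]" n r] by (simp add: add.assoc)

lemma D_const: "length c = k \<Longrightarrow> {c} \<in> Def k"
proof (induction c arbitrary: k)
  case Nil then show ?case using D_tuples[OF om, of 0] by (simp add: tuples_0)
next
  case (Cons a c)
  have "{[a] @ v |v. v \<in> {c}} \<in> Def (1 + length c)"
    using D_prod[OF om D_single[OF om] Cons.IH[OF refl]] by simp
  then show ?case using Cons.prems by simp
qed

end

context
  fixes Def :: "nat \<Rightarrow> 'a::linorder list set set" and S :: "'a list set"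
    and m :: "'a list \<Rightarrow> 'a list \<Rightarrow> 'a list" and n :: nat and e :: "'a list"
  assumes om: "o_minimal_structure Def" and SD: "S \<in> Def n"
    and GamD: "{x @ y @ m x y |x y. x \<in> S \<and> y \<in> S} \<in> Def (n + n + n)"
    and csl: "cs S m e"
begin

definition "Gam = {x @ y @ m x y |x y. x \<in> S \<and> y \<in> S}"
lemma GamD': "Gam \<in> Def (n + n + n)" unfolding Gam_def by (rule GamD)

lemma SL: "x \<in> S \<Longrightarrow> length x = n" using D_len[OF om SD] .
lemma eS': "e \<in> S" using cs.eS[OF csl] .
lemma mS: "x \<in> S \<Longrightarrow> y \<in> S \<Longrightarrow> m x y \<in> S" using cs.cl[OF csl] .
lemma ED: "{e} \<in> Def n" using D_const[OF om] SL[OF eS'] by blast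

lemma memG: assumes "length a = n" "length b = n"
  shows "a @ b @ c \<in> Gam \<longleftrightarrow> a \<in> S \<and> b \<in> S \<and> m a b = c"
proof
  assume "a @ b @ c \<in> Gam"
  then obtain x y where xy: "a @ b @ c = x @ y @ m x y" "x \<in> S" "y \<in> S" unfolding Gam_def by blast
  then have "a = x \<and> b @ c = y @ m x y" using assms SL by (simp add: append_eq_append_conv)
  then have "a = x \<and> b = y \<and> c = m x y" using assms SL xy by (simp add: append_eq_append_conv)
  then show "a \<in> S \<and> b \<in> S \<and> m a b = c" using xy by simp
next
  assume "a \<in> S \<and> b \<in> S \<and> m a b = c"
  then show "a @ b @ c \<in> Gam" unfolding Gam_def by blast
qed

lemma ID: "cs.I S m e \<in> Def n"
proof -
  let ?P = "\<lambda>z. z!0 @ z!0 @ z!0 \<in> Gam \<and> z!0 @ z!1 @ z!0 \<in> Gam \<and> z!1 \<in> {e}"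
  have "BL n 2 ?P \<in> Def (2*n)"
    by (intro BL_and[OF om] BL_three[OF om GamD'] BL_one[OF om ED]) simp_all
  then have "BL n (1+1) ?P \<in> Def ((1+1)*n)" by (simp only: one_add_one)
  from BL_proj[OF om this] have "BL n 1 (\<lambda>xs. \<exists>ys. length ys = 1 \<and> (\<forall>y\<in>set ys. length y = n) \<and> ?P (xs @ ys)) \<in> Def n"
    by (simp only: mult_1)
  moreover have "BL n 1 (\<lambda>xs. \<exists>ys. length ys = 1 \<and> (\<forall>y\<in>set ys. length y = n) \<and> ?P (xs @ ys)) = cs.I S m e"
  proof (rule Set.set_eqI, rule iffI)
    fix v assume "v \<in> BL n 1 (\<lambda>xs. \<exists>ys. length ys = 1 \<and> (\<forall>y\<in>set ys. length y = n) \<and> ?P (xs @ ys))"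
    then obtain t where "length v = n" "length t = n" "?P ([v] @ [t])"
      unfolding BL1 ex1 by blast
    then have "length v = n" "length t = n" "v @ v @ v \<in> Gam \<and> v @ t @ v \<in> Gam \<and> t \<in> {e}"
      by (simp_all only: append_Cons append_Nil nth_Cons_0 nth_Cons_Suc One_nat_def)
    then have v: "length v = n" "length t = n" "v @ v @ v \<in> Gam" "v @ t @ v \<in> Gam" "t = e" by blast+
    then have "v \<in> S \<and> m v v = v \<and> m v e = v" using memG[OF v(1) v(1)] memG[OF v(1) v(2)] by auto
    then show "v \<in> cs.I S m e" unfolding cs.I_def[OF csl] by blast
  next
    fix v assume "v \<in> cs.I S m e"
    then have v: "v \<in> S" "m v v = v" "m v e = v" unfolding cs.I_def[OF csl] by auto
    have l: "length v = n" "length e = n" using SL[OF v(1)] SL[OF eS'] by auto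
    have "v @ v @ v \<in> Gam" "v @ e @ v \<in> Gam" using memG[OF l(1) l(1), of "v"] memG[OF l(1) l(2), of "v"] v eS' by simp_all
    then have "?P ([v] @ [e])" by simp
    then show "v \<in> BL n 1 (\<lambda>xs. \<exists>ys. length ys = 1 \<and> (\<forall>y\<in>set ys. length y = n) \<and> ?P (xs @ ys))"
      unfolding BL1 ex1 using l by blast
  qed
  ultimately show ?thesis by simp
qed

lemma LD: "cs.L S m e \<in> Def n"
proof -
  let ?P = "\<lambda>z. z!0 @ z!0 @ z!0 \<in> Gam \<and> z!1 @ z!0 @ z!0 \<in> Gam \<and> z!1 \<in> {e}"
  have "BL n 2 ?P \<in> Def (2*n)"
    by (intro BL_and[OF om] BL_three[OF om GamD'] BL_one[OF om ED]) simp_all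
  then have "BL n (1+1) ?P \<in> Def ((1+1)*n)" by (simp only: one_add_one)
  from BL_proj[OF om this] have "BL n 1 (\<lambda>xs. \<exists>ys. length ys = 1 \<and> (\<forall>y\<in>set ys. length y = n) \<and> ?P (xs @ ys)) \<in> Def n"
    by (simp only: mult_1)
  moreover have "BL n 1 (\<lambda>xs. \<exists>ys. length ys = 1 \<and> (\<forall>y\<in>set ys. length y = n) \<and> ?P (xs @ ys)) = cs.L S m e"
  proof (rule Set.set_eqI, rule iffI)
    fix v assume "v \<in> BL n 1 (\<lambda>xs. \<exists>ys. length ys = 1 \<and> (\<forall>y\<in>set ys. length y = n) \<and> ?P (xs @ ys))"
    then obtain t where "length v = n" "length t = n" "?P ([v] @ [t])"
      unfolding BL1 ex1 by blast
    then have "length v = n" "length t = n" "v @ v @ v \<in> Gam \<and> t @ v @ v \<in> Gam \<and> t \<in> {e}"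
      by (simp_all only: append_Cons append_Nil nth_Cons_0 nth_Cons_Suc One_nat_def)
    then have v: "length v = n" "length t = n" "v @ v @ v \<in> Gam" "t @ v @ v \<in> Gam" "t = e" by blast+
    then have "v \<in> S \<and> m v v = v \<and> m e v = v" using memG[OF v(1) v(1)] memG[OF v(2) v(1)] by auto
    then show "v \<in> cs.L S m e" unfolding cs.L_def[OF csl] by blast
  next
    fix v assume "v \<in> cs.L S m e"
    then have v: "v \<in> S" "m v v = v" "m e v = v" unfolding cs.L_def[OF csl] by auto
    have l: "length v = n" "length e = n" using SL[OF v(1)] SL[OF eS'] by auto
    have "v @ v @ v \<in> Gam" "e @ v @ v \<in> Gam" using memG[OF l(1) l(1), of "v"] memG[OF l(2) l(1), of "v"] v eS' by simp_all
    then have "?P ([v] @ [e])" by simp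
    then show "v \<in> BL n 1 (\<lambda>xs. \<exists>ys. length ys = 1 \<and> (\<forall>y\<in>set ys. length y = n) \<and> ?P (xs @ ys))"
      unfolding BL1 ex1 using l by blast
  qed
  ultimately show ?thesis by simp
qed

lemma GD: "cs.G S m e \<in> Def n"
proof -
  let ?P = "\<lambda>z. z!1 @ z!0 @ z!0 \<in> Gam \<and> z!0 @ z!1 @ z!0 \<in> Gam \<and> z!1 \<in> {e}"
  have "BL n 2 ?P \<in> Def (2*n)"
    by (intro BL_and[OF om] BL_three[OF om GamD'] BL_one[OF om ED]) simp_all
  then have "BL n (1+1) ?P \<in> Def ((1+1)*n)" by (simp only: one_add_one)
  from BL_proj[OF om this] have "BL n 1 (\<lambda>xs. \<exists>ys. length ys = 1 \<and> (\<forall>y\<in>set ys. length y = n) \<and> ?P (xs @ ys)) \<in> Def n"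
    by (simp only: mult_1)
  moreover have "BL n 1 (\<lambda>xs. \<exists>ys. length ys = 1 \<and> (\<forall>y\<in>set ys. length y = n) \<and> ?P (xs @ ys)) = cs.G S m e"
  proof (rule Set.set_eqI, rule iffI)
    fix v assume "v \<in> BL n 1 (\<lambda>xs. \<exists>ys. length ys = 1 \<and> (\<forall>y\<in>set ys. length y = n) \<and> ?P (xs @ ys))"
    then obtain t where "length v = n" "length t = n" "?P ([v] @ [t])"
      unfolding BL1 ex1 by blast
    then have "length v = n" "length t = n" "t @ v @ v \<in> Gam \<and> v @ t @ v \<in> Gam \<and> t \<in> {e}"
      by (simp_all only: append_Cons append_Nil nth_Cons_0 nth_Cons_Suc One_nat_def)
    then have v: "length v = n" "length t = n" "t @ v @ v \<in> Gam" "v @ t @ v \<in> Gam" "t = e" by blast+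
    then have "v \<in> S \<and> m e v = v \<and> m v e = v" using memG[OF v(2) v(1)] memG[OF v(1) v(2)] by auto
    then show "v \<in> cs.G S m e" unfolding cs.G_def[OF csl] by blast
  next
    fix v assume "v \<in> cs.G S m e"
    then have v: "v \<in> S" "m e v = v" "m v e = v" unfolding cs.G_def[OF csl] by auto
    have l: "length v = n" "length e = n" using SL[OF v(1)] SL[OF eS'] by auto
    have "e @ v @ v \<in> Gam" "v @ e @ v \<in> Gam" using memG[OF l(2) l(1), of "v"] memG[OF l(1) l(2), of "v"] v eS' by simp_all
    then have "?P ([v] @ [e])" by simp
    then show "v \<in> BL n 1 (\<lambda>xs. \<exists>ys. length ys = 1 \<and> (\<forall>y\<in>set ys. length y = n) \<and> ?P (xs @ ys))"
      unfolding BL1 ex1 using l by blast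
  qed
  ultimately show ?thesis by simp
qed

lemma restr3: assumes A: "A \<in> Def n" and B: "B \<in> Def n" and AS: "A \<subseteq> S" and BS: "B \<subseteq> S"
  shows "{x @ y @ m x y |x y. x \<in> A \<and> y \<in> B} \<in> Def (n + n + n)"
proof -
  let ?P = "\<lambda>z. z!0 @ z!1 @ z!2 \<in> Gam \<and> z!0 \<in> A \<and> z!1 \<in> B"
  have "BL n 3 ?P \<in> Def (3*n)"
    by (intro BL_and[OF om] BL_three[OF om GamD'] BL_one[OF om A] BL_one[OF om B]) simp_all
  moreover have "BL n 3 ?P = {x @ y @ m x y |x y. x \<in> A \<and> y \<in> B}"
  proof (rule Set.set_eqI, rule iffI)
    fix v assume "v \<in> BL n 3 ?P"
    then show "v \<in> {x @ y @ m x y |x y. x \<in> A \<and> y \<in> B}" unfolding BL3 by (auto simp: memG) blast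
  next
    fix v assume "v \<in> {x @ y @ m x y |x y. x \<in> A \<and> y \<in> B}"
    then obtain x y where "v = x @ y @ m x y" "x \<in> A" "y \<in> B" by blast
    moreover then have l: "length x = n" "length y = n" "length (m x y) = n" using AS BS SL mS by blast+
    moreover have "x @ y @ m x y \<in> Gam" using memG[OF l(1,2)] AS BS \<open>x \<in> A\<close> \<open>y \<in> B\<close> by auto
    ultimately show "v \<in> BL n 3 ?P" unfolding BL3 by auto
  qed
  ultimately show ?thesis by (simp add: eval_nat_numeral add.assoc)
qed

lemma RGD: "{x @ g |x g. x \<in> S \<and> g = m (m e x) e} \<in> Def (n + n)"
proof -
  let ?P = "\<lambda>z. z!3 @ z!0 @ z!2 \<in> Gam \<and> z!2 @ z!3 @ z!1 \<in> Gam \<and> z!3 \<in> {e}"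
  have "BL n 4 ?P \<in> Def (4*n)"
    by (intro BL_and[OF om] BL_three[OF om GamD'] BL_one[OF om ED]) simp_all
  moreover have e22: "(2::nat) + 2 = 4" by simp
  ultimately have "BL n (2+2) ?P \<in> Def ((2+2)*n)" by (simp only: e22)
  from BL_proj[OF om this] have 1: "BL n 2 (\<lambda>xs. \<exists>ys. length ys = 2 \<and> (\<forall>y\<in>set ys. length y = n) \<and> ?P (xs @ ys)) \<in> Def (2*n)" .
  have "BL n 2 (\<lambda>xs. \<exists>ys. length ys = 2 \<and> (\<forall>y\<in>set ys. length y = n) \<and> ?P (xs @ ys)) = {x @ g |x g. x \<in> S \<and> g = m (m e x) e}"
  proof (rule Set.set_eqI, rule iffI)
    fix v assume "v \<in> BL n 2 (\<lambda>xs. \<exists>ys. length ys = 2 \<and> (\<forall>y\<in>set ys. length y = n) \<and> ?P (xs @ ys))"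
    then show "v \<in> {x @ g |x g. x \<in> S \<and> g = m (m e x) e}" unfolding BL2 ex2 by (auto simp: memG)
  next
    fix v assume "v \<in> {x @ g |x g. x \<in> S \<and> g = m (m e x) e}"
    then obtain x where x: "v = x @ m (m e x) e" "x \<in> S" by blast
    have l: "length x = n" "length (m (m e x) e) = n" "length (m e x) = n" "length e = n"
      using x eS' SL mS by blast+
    show "v \<in> BL n 2 (\<lambda>xs. \<exists>ys. length ys = 2 \<and> (\<forall>y\<in>set ys. length y = n) \<and> ?P (xs @ ys))"
    proof -
      have "e @ x @ m e x \<in> Gam" using memG[OF l(4) l(1)] eS' x(2) by simp
      moreover have "m e x @ e @ m (m e x) e \<in> Gam" using memG[OF l(3) l(4)] eS' x(2) mS by simp
      ultimately have "?P ([x, m (m e x) e] @ [m e x, e])" by simp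
      then show ?thesis unfolding BL2 ex2 using x(1) l by blast
    qed
  qed
  then show ?thesis using 1 by (simp add: mult_2)
qed

lemma PhiD: "{x @ cs.i0 S m e x @ m (m e x) e @ cs.l0 S m e x |x. x \<in> S} \<in> Def (n + n + n + n)"
proof -
  let ?RG = "{x @ g |x g. x \<in> S \<and> g = m (m e x) e}"
  let ?P = "\<lambda>z. z!1 \<in> cs.I S m e \<and> z!1 @ z!0 @ z!0 \<in> Gam \<and> z!3 \<in> cs.L S m e \<and> z!0 @ z!3 @ z!0 \<in> Gam \<and> z!0 @ z!2 \<in> ?RG"
  have 1: "BL n 4 ?P \<in> Def (4*n)"
    by (intro BL_and[OF om] BL_three[OF om GamD'] BL_one[OF om ID] BL_one[OF om LD] BL_two[OF om RGD]) simp_all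
  have "BL n 4 ?P = {x @ cs.i0 S m e x @ m (m e x) e @ cs.l0 S m e x |x. x \<in> S}"
  proof (rule Set.set_eqI, rule iffI)
    fix v assume "v \<in> BL n 4 ?P"
    then obtain x i g l where v0: "v = x @ i @ g @ l" "length x = n" "length i = n" "length g = n" "length l = n"
      "?P [x, i, g, l]" unfolding BL4 by blast
    from v0(6) have p: "i \<in> cs.I S m e" "i @ x @ x \<in> Gam" "l \<in> cs.L S m e" "x @ l @ x \<in> Gam" "x @ g \<in> ?RG"
      by (simp_all only: numeral_3_eq_3 numeral_2_eq_2 One_nat_def nth_Cons_0 nth_Cons_Suc)
    have v: "i \<in> cs.I S m e" "x \<in> S" "m i x = x" "l \<in> cs.L S m e" "m x l = x"
      using p memG[OF v0(3) v0(2)] memG[OF v0(2) v0(5)] by auto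
    from p(5) obtain x' g' where xg: "x @ g = x' @ g'" "x' \<in> S" "g' = m (m e x') e" by blast
    have "length x' = n" using SL xg(2) by blast
    then have "x = x' \<and> g = g'" using xg(1) v0(2) by (simp add: append_eq_append_conv)
    then have g: "g = m (m e x) e" using xg by simp
    have "i = cs.i0 S m e x" using cs.I_uniq[OF csl v(1,2,3)] .
    moreover have "l = cs.l0 S m e x" using cs.L_uniq[OF csl v(4,2,5)] .
    ultimately show "v \<in> {x @ cs.i0 S m e x @ m (m e x) e @ cs.l0 S m e x |x. x \<in> S}" using v0 v g by blast
  next
    fix v assume "v \<in> {x @ cs.i0 S m e x @ m (m e x) e @ cs.l0 S m e x |x. x \<in> S}"
    then obtain x where x: "v = x @ cs.i0 S m e x @ m (m e x) e @ cs.l0 S m e x" "x \<in> S" by blast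
    have iS: "cs.i0 S m e x \<in> cs.I S m e" "cs.l0 S m e x \<in> cs.L S m e" using cs.i0I[OF csl x(2)] cs.l0L[OF csl x(2)] .
    then have iS': "cs.i0 S m e x \<in> S" "cs.l0 S m e x \<in> S" using cs.IS[OF csl] cs.LS[OF csl] by blast+
    have l: "length x = n" "length (cs.i0 S m e x) = n" "length (m (m e x) e) = n" "length (cs.l0 S m e x) = n"
      using x(2) iS' SL mS eS' by blast+
    have c1: "x @ m (m e x) e \<in> ?RG" using x(2) by blast
    have c2: "cs.i0 S m e x @ x @ x \<in> Gam" using memG[OF l(2) l(1)] iS' x(2) cs.i0x[OF csl x(2)] by simp
    have c3: "x @ cs.l0 S m e x @ x \<in> Gam" using memG[OF l(1) l(4)] iS' x(2) cs.xl0[OF csl x(2)] by simp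
    have "?P [x, cs.i0 S m e x, m (m e x) e, cs.l0 S m e x]"
      using c1 c2 c3 iS by (simp only: numeral_3_eq_3 numeral_2_eq_2 One_nat_def nth_Cons_0 nth_Cons_Suc simp_thms)
    then show "v \<in> BL n 4 ?P" unfolding BL4 using x(1) l by blast
  qed
  then show ?thesis using 1 by (simp add: eval_nat_numeral add.assoc)
qed

end

theorem mainTheorem17:
  fixes Def :: "nat \<Rightarrow> 'a::{dense_linorder,no_top,no_bot} list set set"
    and S :: "'a list set" and m :: "'a list \<Rightarrow> 'a list \<Rightarrow> 'a list" and n :: nat
  assumes "o_minimal_structure Def"
    and "definable_choice Def"
    and "aleph1_saturated Def"
    and "definable_op Def n S m"
    and "completely_simple S m"
  shows "\<exists>a b k (I :: 'a list set) (\<Lambda> :: 'a list set) (G :: 'a list set) mg e P \<phi>.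
    I \<in> Def a \<and> \<Lambda> \<in> Def b \<and> I \<noteq> {} \<and> \<Lambda> \<noteq> {} \<and>
    definable_op Def k G mg \<and> group \<lparr>carrier = G, mult = mg, one = e\<rparr> \<and>
    (\<forall>l\<in>\<Lambda>. \<forall>i\<in>I. P l i \<in> G) \<and>
    {l @ i @ P l i |l i. l \<in> \<Lambda> \<and> i \<in> I} \<in> Def (b + a + k) \<and>
    bij_betw \<phi> S (I \<times> G \<times> \<Lambda>) \<and>
    (\<forall>x\<in>S. \<forall>y\<in>S. \<phi> (m x y) = rees_mult mg P (\<phi> x) (\<phi> y)) \<and>
    {x @ fst (\<phi> x) @ fst (snd (\<phi> x)) @ snd (snd (\<phi> x)) |x. x \<in> S} \<in> Def (n + a + k + b)"
proof -
  note om = assms(1)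
  have SD: "S \<in> Def n" and clS: "\<forall>x\<in>S. \<forall>y\<in>S. m x y \<in> S"
    and GamD: "{x @ y @ m x y |x y. x \<in> S \<and> y \<in> S} \<in> Def (n + n + n)"
    using assms(4) unfolding definable_op_def by blast+
  have sg: "semigroup_on S m" and simp_: "\<forall>J. is_ideal S m J \<and> J \<noteq> {} \<longrightarrow> J = S"
    using assms(5) unfolding completely_simple_def simple_semigroup_def by blast+
  obtain e where pe: "primitive_idempotent S m e" using assms(5) unfolding completely_simple_def by blast
  have asc: "\<And>x y z. x\<in>S \<Longrightarrow> y\<in>S \<Longrightarrow> z\<in>S \<Longrightarrow> m (m x y) z = m x (m y z)"
    using sg unfolding semigroup_on_def by blast
  have csl: "cs S m e"
  proof (unfold_locales)
    show "\<And>x y. x \<in> S \<Longrightarrow> y \<in> S \<Longrightarrow> m x y \<in> S" using clS by blast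
    show "\<And>x y z. x\<in>S \<Longrightarrow> y\<in>S \<Longrightarrow> z\<in>S \<Longrightarrow> m (m x y) z = m x (m y z)" by (rule asc)
    show "e \<in> S" "m e e = e" using pe unfolding primitive_idempotent_def by blast+
    show "\<And>f. f \<in> S \<Longrightarrow> m f f = f \<Longrightarrow> m e f = f \<Longrightarrow> m f e = f \<Longrightarrow> f = e"
      using pe unfolding primitive_idempotent_def by blast
    fix x y assume x: "x \<in> S" and y: "y \<in> S"
    define J where "J = {m (m u x) v |u v. u \<in> S \<and> v \<in> S}"
    have "is_ideal S m J" unfolding is_ideal_def
    proof (intro conjI ballI)
      show "J \<subseteq> S" unfolding J_def using clS x by blast
      fix s j assume s: "s \<in> S" and j: "j \<in> J"
      then obtain u v where uv: "j = m (m u x) v" "u \<in> S" "v \<in> S" unfolding J_def by blast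
      have "m s j = m (m (m s u) x) v" using uv s x asc clS by metis
      then show "m s j \<in> J" unfolding J_def using uv s clS by blast
      have "m j s = m (m u x) (m v s)" using uv s x asc clS by metis
      then show "m j s \<in> J" unfolding J_def using uv s clS by blast
    qed
    moreover have "J \<noteq> {}" unfolding J_def using x by blast
    ultimately have "J = S" using simp_ by blast
    then show "\<exists>u\<in>S. \<exists>v\<in>S. y = m (m u x) v" using y unfolding J_def by blast
  qed
  let ?I = "cs.I S m e" and ?L = "cs.L S m e" and ?G = "cs.G S m e" and ?phi = "cs.phi S m e"
  have GS: "?G \<subseteq> S" "?I \<subseteq> S" "?L \<subseteq> S" using cs.GS[OF csl] cs.IS[OF csl] cs.LS[OF csl] by blast+
  have 1: "?I \<in> Def n" by (rule ID[OF om SD GamD csl])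
  have 2: "?L \<in> Def n" by (rule LD[OF om SD GamD csl])
  have 3: "?I \<noteq> {}" "?L \<noteq> {}" using cs.eI[OF csl] cs.eLL[OF csl] by blast+
  have GD: "?G \<in> Def n" by (rule GD[OF om SD GamD csl])
  have 4: "definable_op Def n ?G m" unfolding definable_op_def
    using GD cs.Gm[OF csl] restr3[OF om SD GamD csl GD GD GS(1) GS(1)] by blast
  have 5: "group \<lparr>carrier = ?G, mult = m, one = e\<rparr>" by (rule cs.grp[OF csl])
  have 6: "\<forall>l\<in>?L. \<forall>i\<in>?I. m l i \<in> ?G" using cs.LIG[OF csl] by blast
  have 7: "{l @ i @ m l i |l i. l \<in> ?L \<and> i \<in> ?I} \<in> Def (n + n + n)"
    by (rule restr3[OF om SD GamD csl 2 1 GS(3) GS(2)])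
  have 8: "bij_betw ?phi S (?I \<times> ?G \<times> ?L)" by (rule cs.phi_bij[OF csl])
  have 9: "\<forall>x\<in>S. \<forall>y\<in>S. ?phi (m x y) = rees_mult m m (?phi x) (?phi y)" using cs.phi_hom[OF csl] by blast
  have "{x @ fst (?phi x) @ fst (snd (?phi x)) @ snd (snd (?phi x)) |x. x \<in> S}
      = {x @ cs.i0 S m e x @ m (m e x) e @ cs.l0 S m e x |x. x \<in> S}"
    by (simp add: cs.phi_def[OF csl])
  then have 10: "{x @ fst (?phi x) @ fst (snd (?phi x)) @ snd (snd (?phi x)) |x. x \<in> S} \<in> Def (n + n + n + n)"
    using PhiD[OF om SD GamD csl] by simp
  show ?thesis
    apply (rule exI[of _ n], rule exI[of _ n], rule exI[of _ n])
    apply (rule exI[of _ ?I], rule exI[of _ ?L], rule exI[of _ ?G], rule exI[of _ m], rule exI[of _ e])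
    apply (rule exI[of _ m], rule exI[of _ ?phi])
    using 1 2 3 4 5 6 7 8 9 10 by blast
qed

end
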